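(* Let $n\ge1$, $0=b_0<b_1<\dots<b_n<b_{n+1}=1$, $h_i=b_{i+1}-b_i$ ($i=0,\dots,n$), $h_{\min}=\min_{0\le i\le n}h_i$, $\tilde h_i=\min\{h_{i-1},h_i\}$ ($i=1,\dots,n$). Let $w\in C(I)$, $I=(0,1)$, with $0\le w_0\le w(x)$ for all $x\in I$. Then for all $\boldsymbol\alpha=(\alpha_0,\dots,\alpha_n)^T\in\mathbb{R}^{n+1}$, $\boldsymbol\beta=(\beta_1,\dots,\beta_n)^T\in\mathbb{R}^n$: $$(\boldsymbol\alpha^T,\boldsymbol\beta^T)\,\mathbb{H}_\Sigma(w)\begin{pmatrix}\boldsymbol\alpha\\ \boldsymbol\beta\end{pmatrix}\ \ge\ \frac{w_0h_{\min}^3}{96}|\boldsymbol\alpha|^2+\frac{w_0}{24}\sum_{i=1}^n\tilde h_i\beta_i^2,$$ and, if $w_0>0$, then for every $\tau\in(0,1]$, $$(\boldsymbol\alpha^T,\boldsymbol\beta^T)\,\mathbb{H}_\Lambda(w)\begin{pmatrix}\boldsymbol\alpha\\ \boldsymbol\beta\end{pmatrix}\ \ge\ \frac{w_0(1-\tau)h_{\min}}{4}|\boldsymbol\alpha|^2-\frac{1}{2\tau w_0}\sum_{i=1}^n w(b_i)^2\big(h_{i-1}^{-1}+h_i^{-1}\big)\beta_i^2,$$ where $|\boldsymbol\alpha|$ is the Euclidean norm.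
   Context: $\sigma(t)=\max\{0,t\}$; $H(t)=1$ for $t>0$, $H(0)=1/2$, $H(t)=0$ for $t<0$. Set $\sigma_i(x)=\sigma(x-b_i)$, $H_i(x)=H(x-b_i)$. $\mathbb{H}_\Sigma(w)$ is the symmetric $(2n+1)\times(2n+1)$ matrix with blocks: upper-left $(\int_0^1 w\,\sigma_i\sigma_j\,dx)_{i,j=0}^n$, upper-right $(-\int_0^1 w\,\sigma_iH_j\,dx)_{i=0..n,\,j=1..n}$, lower-left its transpose, lower-right $(\int_0^1 w\,H_iH_j\,dx)_{i,j=1}^n$. $\mathbb{H}_\Lambda(w)$ is the symmetric $(2n+1)\times(2n+1)$ matrix with blocks: upper-left $(\int_0^1 w\,H_iH_j\,dx)_{i,j=0}^n$, upper-right $K=(K_{ij})_{i=0..n,\,j=1..n}$ with $K_{ij}=-w(b_j)H(b_j-b_i)$ (i.e. the formal integral $-\int_0^1 w(x)H_i(x)\delta(x-b_j)dx$), lower-left $K^T$, lower-right the zero $n\times n$ matrix. *)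

theory Defs
  imports "HOL-Analysis.Analysis"
begin

definition relu :: "real \<Rightarrow> real" where
  "relu t = max 0 t"

definition heav :: "real \<Rightarrow> real" where
  "heav t = (if t > 0 then 1 else if t = 0 then 1/2 else 0)"

definition HSigma_form ::
  "(real \<Rightarrow> real) \<Rightarrow> (nat \<Rightarrow> real) \<Rightarrow> nat \<Rightarrow> (nat \<Rightarrow> real) \<Rightarrow> (nat \<Rightarrow> real) \<Rightarrow> real" where
  "HSigma_form w b n \<alpha> \<beta> =
     (\<Sum>i=0..n. \<Sum>j=0..n. \<alpha> i * integral {0..1} (\<lambda>x. w x * relu (x - b i) * relu (x - b j)) * \<alpha> j)
   + (\<Sum>i=0..n. \<Sum>j=1..n. \<alpha> i * (- integral {0..1} (\<lambda>x. w x * relu (x - b i) * heav (x - b j))) * \<beta> j)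
   + (\<Sum>i=1..n. \<Sum>j=0..n. \<beta> i * (- integral {0..1} (\<lambda>x. w x * relu (x - b j) * heav (x - b i))) * \<alpha> j)
   + (\<Sum>i=1..n. \<Sum>j=1..n. \<beta> i * integral {0..1} (\<lambda>x. w x * heav (x - b i) * heav (x - b j)) * \<beta> j)"

definition HLambda_form ::
  "(real \<Rightarrow> real) \<Rightarrow> (nat \<Rightarrow> real) \<Rightarrow> nat \<Rightarrow> (nat \<Rightarrow> real) \<Rightarrow> (nat \<Rightarrow> real) \<Rightarrow> real" where
  "HLambda_form w b n \<alpha> \<beta> =
     (\<Sum>i=0..n. \<Sum>j=0..n. \<alpha> i * integral {0..1} (\<lambda>x. w x * heav (x - b i) * heav (x - b j)) * \<alpha> j)
   + (\<Sum>i=0..n. \<Sum>j=1..n. \<alpha> i * (- w (b j) * heav (b j - b i)) * \<beta> j)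
   + (\<Sum>i=1..n. \<Sum>j=0..n. \<beta> i * (- w (b i) * heav (b i - b j)) * \<alpha> j)"

end

theory Submission
  imports Defs
begin


definition BM :: "(real \<Rightarrow> real) \<Rightarrow> bool" where
  "BM g \<longleftrightarrow> g \<in> borel_measurable (lebesgue_on {0..1}) \<and> (\<exists>B. \<forall>x\<in>{0..1}. \<bar>g x\<bar> \<le> B)"

lemma BM_mono: assumes "mono g" "\<forall>x\<in>{0..1}. \<bar>g x\<bar> \<le> B" shows "BM g"
proof -
  have "g \<in> borel_measurable borel" using assms(1) by (rule borel_measurable_mono)
  then have "g \<in> borel_measurable (lebesgue_on {0..1})"
    by (simp add: measurable_completion measurable_restrict_space1)
  then show ?thesis unfolding BM_def using assms by blast
qed

lemma mono_relu: "mono (\<lambda>x. relu (x - c))"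
  unfolding mono_def relu_def by auto

lemma mono_heav: "mono (\<lambda>x. heav (x - c))"
  unfolding mono_def heav_def by auto

lemma BM_relu: "BM (\<lambda>x. relu (x - c))"
proof (rule BM_mono[OF mono_relu])
  show "\<forall>x\<in>{0..1}. \<bar>relu (x - c)\<bar> \<le> 1 + \<bar>c\<bar>" unfolding relu_def by auto
qed

lemma BM_heav: "BM (\<lambda>x. heav (x - c))"
proof (rule BM_mono[OF mono_heav])
  show "\<forall>x\<in>{0..1}. \<bar>heav (x - c)\<bar> \<le> 1" unfolding heav_def by auto
qed

lemma BM_mult: assumes "BM f" "BM g" shows "BM (\<lambda>x. f x * g x)"
proof -
  obtain A where A: "\<forall>x\<in>{0..1}. \<bar>f x\<bar> \<le> A" using assms unfolding BM_def by blast
  obtain B where B: "\<forall>x\<in>{0..1}. \<bar>g x\<bar> \<le> B" using assms unfolding BM_def by blast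
  have "\<forall>x\<in>{0..1}. \<bar>f x * g x\<bar> \<le> A * B"
  proof
    fix x :: real assume x: "x \<in> {0..1}"
    have a: "\<bar>f x\<bar> \<le> A" and bb: "\<bar>g x\<bar> \<le> B" using A B x by auto
    have "0 \<le> A" using a abs_ge_zero order.trans by blast
    then have "\<bar>f x\<bar> * \<bar>g x\<bar> \<le> A * B" using a bb by (intro mult_mono) auto
    then show "\<bar>f x * g x\<bar> \<le> A * B" by (simp add: abs_mult)
  qed
  then show ?thesis using assms unfolding BM_def by auto
qed

lemma BM_add: assumes "BM f" "BM g" shows "BM (\<lambda>x. f x + g x)"
proof -
  obtain A where A: "\<forall>x\<in>{0..1}. \<bar>f x\<bar> \<le> A" using assms unfolding BM_def by blast
  obtain B where B: "\<forall>x\<in>{0..1}. \<bar>g x\<bar> \<le> B" using assms unfolding BM_def by blast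
  have "\<forall>x\<in>{0..1}. \<bar>f x + g x\<bar> \<le> A + B"
  proof
    fix x :: real assume x: "x \<in> {0..1}"
    have "\<bar>f x + g x\<bar> \<le> \<bar>f x\<bar> + \<bar>g x\<bar>" by (rule abs_triangle_ineq)
    also have "\<dots> \<le> A + B" using A B x by (intro add_mono) auto
    finally show "\<bar>f x + g x\<bar> \<le> A + B" .
  qed
  then show ?thesis using assms unfolding BM_def by auto
qed

lemma BM_const: "BM (\<lambda>x. c)"
  unfolding BM_def by auto

lemma BM_diff: assumes "BM f" "BM g" shows "BM (\<lambda>x. f x - g x)"
proof -
  have "BM (\<lambda>x. f x + (-1) * g x)"
    by (intro BM_add BM_mult BM_const assms)
  then show ?thesis by simp
qed

lemma BM_sum: assumes "finite I" "\<And>i. i \<in> I \<Longrightarrow> BM (f i)" shows "BM (\<lambda>x. \<Sum>i\<in>I. f i x)"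
  using assms
proof (induction I rule: finite_induct)
  case empty then show ?case by (simp add: BM_const)
next
  case (insert a F)
  then have "BM (\<lambda>x. f a x + (\<Sum>i\<in>F. f i x))" by (intro BM_add) auto
  then show ?case using insert by simp
qed

lemma BM_int: assumes "BM g" "V absolutely_integrable_on {0..1}"
  shows "(\<lambda>x. V x * g x) integrable_on {0..1}"
proof -
  obtain B where B: "\<forall>x\<in>{0..1}. \<bar>g x\<bar> \<le> B" using assms unfolding BM_def by blast
  have "bounded (g ` {0..1})" unfolding bounded_real using B by auto
  then have "(\<lambda>x. g x * V x) absolutely_integrable_on {0..1}"
    using assms(1) unfolding BM_def
    by (intro absolutely_integrable_bounded_measurable_product_real assms(2)) auto
  then have "(\<lambda>x. g x * V x) integrable_on {0..1}"
    using absolutely_integrable_on_def by blast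
  then show ?thesis by (simp add: mult.commute)
qed

definition Wf :: "(real \<Rightarrow> real) \<Rightarrow> real \<Rightarrow> real \<Rightarrow> real" where
  "Wf w w0 x = (if 0 < x \<and> x < 1 then w x else w0)"

lemma Wf_spike: "integral {0..1} (\<lambda>x. w x * A x * B x) = integral {0..1} (\<lambda>x. Wf w c x * (A x * B x))"
proof (rule integral_spike[of "{0,1}"])
  show "negligible {0::real, 1}" by simp
qed (auto simp: Wf_def)

lemma Wf_abs: assumes "w integrable_on {0..1}" "0 \<le> w0" "\<forall>x\<in>{0<..<1}. w0 \<le> w x"
  shows "Wf w w0 absolutely_integrable_on {0..1}"
proof (rule nonnegative_absolutely_integrable_1)
  show "Wf w w0 integrable_on {0..1}"
    by (rule integrable_spike[OF assms(1), of "{0,1}"]) (auto simp: Wf_def)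
  show "\<And>x. x \<in> {0..1} \<Longrightarrow> 0 \<le> Wf w w0 x" using assms(2,3) unfolding Wf_def by (smt (verit) greaterThanLessThan_iff)
qed

lemma int_cmul: "(f::real \<Rightarrow> real) integrable_on S \<Longrightarrow> (\<lambda>x. c * f x) integrable_on S"
  using integrable_cmul[of f S c] by simp

lemma bil:
  fixes W :: "real \<Rightarrow> real" and f g :: "'i \<Rightarrow> real \<Rightarrow> real" and a c :: "'i \<Rightarrow> real"
  assumes "finite I" "finite J" "\<And>i j. i \<in> I \<Longrightarrow> j \<in> J \<Longrightarrow> (\<lambda>x. W x * (f i x * g j x)) integrable_on S"
  shows "(\<Sum>i\<in>I. \<Sum>j\<in>J. a i * integral S (\<lambda>x. W x * (f i x * g j x)) * c j)
     = integral S (\<lambda>x. W x * ((\<Sum>i\<in>I. a i * f i x) * (\<Sum>j\<in>J. c j * g j x)))"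
proof -
  have e: "W x * ((\<Sum>i\<in>I. a i * f i x) * (\<Sum>j\<in>J. c j * g j x))
     = (\<Sum>i\<in>I. \<Sum>j\<in>J. a i * c j * (W x * (f i x * g j x)))" for x
  proof -
    have "W x * ((\<Sum>i\<in>I. a i * f i x) * (\<Sum>j\<in>J. c j * g j x))
      = W x * (\<Sum>i\<in>I. \<Sum>j\<in>J. (a i * f i x) * (c j * g j x))"
    proof -
      have p: "(\<Sum>i\<in>I. a i * f i x) * (\<Sum>j\<in>J. c j * g j x) = (\<Sum>i\<in>I. \<Sum>j\<in>J. (a i * f i x) * (c j * g j x))"
        by (simp add: sum_distrib_left sum_distrib_right) (rule sum.swap)
      show ?thesis by (simp only: p)
    qed
    also have "\<dots> = (\<Sum>i\<in>I. \<Sum>j\<in>J. W x * ((a i * f i x) * (c j * g j x)))"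
      by (simp only: sum_distrib_left)
    also have "\<dots> = (\<Sum>i\<in>I. \<Sum>j\<in>J. a i * c j * (W x * (f i x * g j x)))"
      by (intro sum.cong refl) (simp only: mult_ac)
    finally show ?thesis .
  qed
  have i1: "\<And>i. i \<in> I \<Longrightarrow> (\<lambda>x. \<Sum>j\<in>J. a i * c j * (W x * (f i x * g j x))) integrable_on S"
    using assms by (intro integrable_sum int_cmul) auto
  have "integral S (\<lambda>x. \<Sum>i\<in>I. \<Sum>j\<in>J. a i * c j * (W x * (f i x * g j x)))
     = (\<Sum>i\<in>I. integral S (\<lambda>x. \<Sum>j\<in>J. a i * c j * (W x * (f i x * g j x))))"
    using assms(1) i1 by (rule Henstock_Kurzweil_Integration.integral_sum)
  also have "\<dots> = (\<Sum>i\<in>I. \<Sum>j\<in>J. integral S (\<lambda>x. a i * c j * (W x * (f i x * g j x))))"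
    using assms by (intro sum.cong refl Henstock_Kurzweil_Integration.integral_sum) (auto intro: int_cmul)
  also have "\<dots> = (\<Sum>i\<in>I. \<Sum>j\<in>J. a i * integral S (\<lambda>x. W x * (f i x * g j x)) * c j)"
    by (intro sum.cong refl) (simp only: Henstock_Kurzweil_Integration.integral_mult_right, simp only: mult_ac)
  finally show ?thesis unfolding e by simp
qed



lemma alpha_le_aux: fixes \<alpha> :: "nat \<Rightarrow> real"
  shows "(\<Sum>k=0..n. (\<alpha> k)\<^sup>2) + 2*(\<Sum>i=0..n. \<alpha> i)\<^sup>2 \<le> 4*(\<Sum>k=0..n. (\<Sum>i=0..k. \<alpha> i)\<^sup>2)"
proof (induction n)
  case 0 then show ?case by simp
next
  case (Suc n)
  define S where "S = (\<Sum>i=0..n. \<alpha> i)"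
  have k: "(\<alpha> (Suc n))\<^sup>2 + 2*(S + \<alpha> (Suc n))\<^sup>2 - 2 * S\<^sup>2 \<le> 4 * (S + \<alpha> (Suc n))\<^sup>2"
  proof -
    have "0 \<le> (2*S + \<alpha> (Suc n))\<^sup>2" by simp
    then show ?thesis by (simp add: power2_eq_square algebra_simps)
  qed
  show ?case using Suc k unfolding S_def by (simp add: sum.atLeast0_atMost_Suc)
qed

lemma alpha_le: fixes \<alpha> :: "nat \<Rightarrow> real"
  shows "(\<Sum>k=0..n. (\<alpha> k)\<^sup>2) \<le> 4*(\<Sum>k=0..n. (\<Sum>i=0..k. \<alpha> i)\<^sup>2)"
  using alpha_le_aux[of \<alpha> n] by (smt (verit) zero_le_power2)

lemma shift_le_aux: fixes A B :: "nat \<Rightarrow> real"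
  assumes "\<forall>k\<le>n. 0 \<le> A k \<and> 0 \<le> B k"
  shows "(\<Sum>i=1..n. A (i - 1) + B i) + A n \<le> (\<Sum>k=0..n. A k + B k)"
  using assms
proof (induction n)
  case 0 then show ?case by simp
next
  case (Suc n)
  then have "(\<Sum>i=1..n. A (i - 1) + B i) + A n \<le> (\<Sum>k=0..n. A k + B k)" by simp
  then show ?case by (simp add: sum.atLeast0_atMost_Suc)
qed

lemma shift_le: fixes A B :: "nat \<Rightarrow> real"
  assumes "\<forall>k\<le>n. 0 \<le> A k \<and> 0 \<le> B k"
  shows "(\<Sum>i=1..n. A (i - 1) + B i) \<le> (\<Sum>k=0..n. A k + B k)"
  using shift_le_aux[OF assms] assms by force

lemma young: fixes a x y :: real assumes "0 < a"
  shows "x * y \<le> a * x\<^sup>2 / 2 + y\<^sup>2 / (2 * a)"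
proof -
  have "0 \<le> (a*x - y)\<^sup>2" by simp
  then have "2*a*(x*y) \<le> a^2*x^2 + y^2" by (simp add: power2_eq_square algebra_simps)
  then show ?thesis using assms by (simp add: field_simps power2_eq_square)
qed

lemma per_sigma: fixes h L s :: real assumes "0 < h"
  shows "h * ((L + s*h)\<^sup>2 + L\<^sup>2)/12 + h^3 * s\<^sup>2/24 \<le> h * (L\<^sup>2 + L * s * h + s\<^sup>2 * h\<^sup>2/3)"
proof -
  have e: "h * (L\<^sup>2 + L * s * h + s\<^sup>2 * h\<^sup>2/3) - (h * ((L + s*h)\<^sup>2 + L\<^sup>2)/12 + h^3 * s\<^sup>2/24)
      = 5 * h * (2*L + s*h)\<^sup>2 / 24"
    by (simp add: field_simps power2_eq_square power3_eq_cube)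
  have "0 \<le> 5 * h * (2*L + s*h)\<^sup>2 / 24" using assms by simp
  then show ?thesis using e by linarith
qed

lemma disc_sigma:
  fixes h L s \<alpha> \<beta> :: "nat \<Rightarrow> real" and hmin :: real and n :: nat
  assumes hpos: "\<forall>k\<le>n. 0 < h k" and hm: "0 < hmin" "\<forall>k\<le>n. hmin \<le> h k"
    and sdef: "\<forall>k\<le>n. s k = (\<Sum>i=0..k. \<alpha> i)"
    and bet: "\<forall>k\<in>{1..n}. \<beta> k = (L (k-1) + s (k-1) * h (k-1)) - L k"
  shows "hmin^3/96 * (\<Sum>i=0..n. (\<alpha> i)\<^sup>2) + 1/24 * (\<Sum>i=1..n. min (h (i-1)) (h i) * (\<beta> i)\<^sup>2)
     \<le> (\<Sum>k=0..n. h k * ((L k)\<^sup>2 + L k * s k * h k + (s k)\<^sup>2 * (h k)\<^sup>2/3))"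
proof -
  define R where "R k = L k + s k * h k" for k
  have per: "h k * ((R k)\<^sup>2 + (L k)\<^sup>2)/12 + (h k)^3 * (s k)\<^sup>2/24
     \<le> h k * ((L k)\<^sup>2 + L k * s k * h k + (s k)\<^sup>2 * (h k)\<^sup>2/3)" if "k \<le> n" for k
    unfolding R_def using per_sigma hpos that by blast
  have p1: "hmin^3/96 * (\<Sum>i=0..n. (\<alpha> i)\<^sup>2) \<le> (\<Sum>k=0..n. (h k)^3 * (s k)\<^sup>2/24)"
  proof -
    have "hmin^3/96 * (\<Sum>i=0..n. (\<alpha> i)\<^sup>2) \<le> hmin^3/96 * (4*(\<Sum>k=0..n. (\<Sum>i=0..k. \<alpha> i)\<^sup>2))"
      using hm(1) alpha_le[of \<alpha> n] by (intro mult_left_mono) auto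
    also have "\<dots> = (\<Sum>k=0..n. hmin^3 * (s k)\<^sup>2/24)"
      using sdef by (simp add: sum_distrib_left sum_divide_distrib)
    also have "\<dots> \<le> (\<Sum>k=0..n. (h k)^3 * (s k)\<^sup>2/24)"
    proof (rule sum_mono)
      fix k assume "k \<in> {0..n}"
      then have "hmin^3 \<le> (h k)^3" using hm by (intro power_mono) auto
      then show "hmin^3 * (s k)\<^sup>2/24 \<le> (h k)^3 * (s k)\<^sup>2/24"
        by (intro divide_right_mono mult_right_mono) auto
    qed
    finally show ?thesis .
  qed
  have p2: "1/24 * (\<Sum>i=1..n. min (h (i-1)) (h i) * (\<beta> i)\<^sup>2)
     \<le> (\<Sum>k=0..n. h k * (R k)\<^sup>2/12 + h k * (L k)\<^sup>2/12)"
  proof -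
    have "1/24 * (\<Sum>i=1..n. min (h (i-1)) (h i) * (\<beta> i)\<^sup>2)
       = (\<Sum>i=1..n. min (h (i-1)) (h i) * (\<beta> i)\<^sup>2 / 24)"
      by (simp add: sum_distrib_left)
    also have "\<dots> \<le> (\<Sum>i=1..n. h (i-1) * (R (i-1))\<^sup>2/12 + h i * (L i)\<^sup>2/12)"
    proof (rule sum_mono)
      fix i assume i: "i \<in> {1..n}"
      have b: "\<beta> i = R (i-1) - L i" using bet i unfolding R_def by auto
      have "i - 1 \<le> n" "i \<le> n" using i by auto
      then have "0 < h (i-1)" "0 < h i" using hpos by blast+
      then have m0: "0 \<le> min (h (i-1)) (h i)" by simp
      have "(\<beta> i)\<^sup>2 \<le> 2 * (R (i-1))\<^sup>2 + 2 * (L i)\<^sup>2"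
        unfolding b by (smt (verit) power2_eq_square sum_squares_ge_zero zero_le_power2
              power2_diff power2_sum)
      then have "min (h (i-1)) (h i) * (\<beta> i)\<^sup>2 \<le> min (h (i-1)) (h i) * (2 * (R (i-1))\<^sup>2 + 2 * (L i)\<^sup>2)"
        using m0 by (rule mult_left_mono)
      also have "\<dots> \<le> 2 * h (i-1) * (R (i-1))\<^sup>2 + 2 * h i * (L i)\<^sup>2"
      proof -
        have "min (h (i-1)) (h i) * (R (i-1))\<^sup>2 \<le> h (i-1) * (R (i-1))\<^sup>2"
          by (intro mult_right_mono) auto
        moreover have "min (h (i-1)) (h i) * (L i)\<^sup>2 \<le> h i * (L i)\<^sup>2"
          by (intro mult_right_mono) auto
        ultimately show ?thesis by (simp add: algebra_simps)
      qed
      finally show "min (h (i-1)) (h i) * (\<beta> i)\<^sup>2 / 24 \<le> h (i-1) * (R (i-1))\<^sup>2/12 + h i * (L i)\<^sup>2/12"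
        by simp
    qed
    also have "\<dots> \<le> (\<Sum>k=0..n. h k * (R k)\<^sup>2/12 + h k * (L k)\<^sup>2/12)"
      by (rule shift_le[of n "\<lambda>k. h k * (R k)\<^sup>2/12" "\<lambda>k. h k * (L k)\<^sup>2/12"])
         (use hpos in auto)
    finally show ?thesis .
  qed
  have "hmin^3/96 * (\<Sum>i=0..n. (\<alpha> i)\<^sup>2) + 1/24 * (\<Sum>i=1..n. min (h (i-1)) (h i) * (\<beta> i)\<^sup>2)
     \<le> (\<Sum>k=0..n. (h k)^3 * (s k)\<^sup>2/24) + (\<Sum>k=0..n. h k * (R k)\<^sup>2/12 + h k * (L k)\<^sup>2/12)"
    using p1 p2 by linarith
  also have "\<dots> = (\<Sum>k=0..n. h k * ((R k)\<^sup>2 + (L k)\<^sup>2)/12 + (h k)^3 * (s k)\<^sup>2/24)"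
    by (simp add: sum.distrib[symmetric] algebra_simps add_divide_distrib)
  also have "\<dots> \<le> (\<Sum>k=0..n. h k * ((L k)\<^sup>2 + L k * s k * h k + (s k)\<^sup>2 * (h k)\<^sup>2/3))"
    using per by (intro sum_mono) auto
  finally show ?thesis .
qed

lemma per_lambda:
  fixes x1 x2 y h1 h2 t :: real assumes "0 < h1" "0 < h2" "0 < t"
  shows "y * (x1 + x2) \<le> t*h1*x1\<^sup>2/2 + t*h2*x2\<^sup>2/2 + y\<^sup>2 * (1/h1 + 1/h2) / (2*t)"
proof -
  have a: "x1 * y \<le> (t*h1) * x1\<^sup>2/2 + y\<^sup>2/(2*(t*h1))" using assms by (intro young) simp
  have b: "x2 * y \<le> (t*h2) * x2\<^sup>2/2 + y\<^sup>2/(2*(t*h2))" using assms by (intro young) simp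
  have e: "y\<^sup>2/(2*(t*h1)) + y\<^sup>2/(2*(t*h2)) = y\<^sup>2 * (1/h1 + 1/h2) / (2*t)"
    using assms by (simp add: field_simps)
  show ?thesis using a b e by (simp add: algebra_simps)
qed

lemma disc_lambda:
  fixes h c \<alpha> \<beta> Wb :: "nat \<Rightarrow> real" and hmin w0 \<tau> :: real and n :: nat
  assumes hpos: "\<forall>k\<le>n. 0 < h k" and hm: "0 < hmin" "\<forall>k\<le>n. hmin \<le> h k"
    and cdef: "\<forall>k\<le>n. c k = (\<Sum>i=0..k. \<alpha> i)"
    and w0: "0 < w0" and tau: "0 < \<tau>" "\<tau> \<le> 1"
  shows "w0 * (1 - \<tau>) * hmin / 4 * (\<Sum>i=0..n. (\<alpha> i)\<^sup>2)
       - 1 / (2 * \<tau> * w0) * (\<Sum>i=1..n. (Wb i)\<^sup>2 * (1 / h (i - 1) + 1 / h i) * (\<beta> i)\<^sup>2)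
     \<le> w0 * (\<Sum>k=0..n. h k * (c k)\<^sup>2) - (\<Sum>j=1..n. \<beta> j * Wb j * (c (j-1) + c j))"
proof -
  let ?Q = "\<Sum>i=1..n. (Wb i)\<^sup>2 * (1 / h (i - 1) + 1 / h i) * (\<beta> i)\<^sup>2"
  have cr: "(\<Sum>j=1..n. \<beta> j * Wb j * (c (j-1) + c j))
     \<le> (\<Sum>j=1..n. (\<tau>*w0*h (j-1)*(c (j-1))\<^sup>2/2) + (\<tau>*w0*h j*(c j)\<^sup>2/2))
       + (\<Sum>j=1..n. (\<beta> j * Wb j)\<^sup>2 * (1/h (j-1) + 1/h j) / (2*(\<tau>*w0)))"
    unfolding sum.distrib[symmetric]
  proof (rule sum_mono)
    fix j assume j: "j \<in> {1..n}"
    have "j - 1 \<le> n" "j \<le> n" using j by auto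
    then have "0 < h (j-1)" "0 < h j" using hpos by blast+
    then have "(\<beta> j * Wb j) * (c (j-1) + c j) \<le> (\<tau>*w0)*h (j-1)*(c (j-1))\<^sup>2/2 + (\<tau>*w0)*h j*(c j)\<^sup>2/2
        + (\<beta> j * Wb j)\<^sup>2 * (1/h (j-1) + 1/h j) / (2*(\<tau>*w0))"
      using w0 tau by (intro per_lambda) auto
    then show "\<beta> j * Wb j * (c (j-1) + c j) \<le> \<tau>*w0*h (j-1)*(c (j-1))\<^sup>2/2 + \<tau>*w0*h j*(c j)\<^sup>2/2
        + (\<beta> j * Wb j)\<^sup>2 * (1/h (j-1) + 1/h j) / (2*(\<tau>*w0))" by (simp add: mult.assoc)
  qed
  have q: "(\<Sum>j=1..n. (\<beta> j * Wb j)\<^sup>2 * (1/h (j-1) + 1/h j) / (2*(\<tau>*w0))) = 1 / (2 * \<tau> * w0) * ?Q"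
    by (simp add: sum_distrib_left sum_divide_distrib power_mult_distrib mult_ac)
  have sh: "(\<Sum>j=1..n. (\<tau>*w0*h (j-1)*(c (j-1))\<^sup>2/2) + (\<tau>*w0*h j*(c j)\<^sup>2/2))
      \<le> (\<Sum>k=0..n. (\<tau>*w0*h k*(c k)\<^sup>2/2) + (\<tau>*w0*h k*(c k)\<^sup>2/2))"
    by (rule shift_le[of n "\<lambda>k. \<tau>*w0*h k*(c k)\<^sup>2/2" "\<lambda>k. \<tau>*w0*h k*(c k)\<^sup>2/2"])
       (use hpos w0 tau in auto)
  have sh2: "(\<Sum>k=0..n. (\<tau>*w0*h k*(c k)\<^sup>2/2) + (\<tau>*w0*h k*(c k)\<^sup>2/2)) = \<tau> * w0 * (\<Sum>k=0..n. h k * (c k)\<^sup>2)"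
    by (simp add: sum_distrib_left mult_ac)
  have m: "w0 * (1 - \<tau>) * hmin / 4 * (\<Sum>i=0..n. (\<alpha> i)\<^sup>2) \<le> (1 - \<tau>) * w0 * (\<Sum>k=0..n. h k * (c k)\<^sup>2)"
  proof -
    have nn: "0 \<le> w0 * (1 - \<tau>) * hmin / 4" using w0 tau hm by simp
    have "w0 * (1 - \<tau>) * hmin / 4 * (\<Sum>i=0..n. (\<alpha> i)\<^sup>2) \<le> w0 * (1 - \<tau>) * hmin / 4 * (4*(\<Sum>k=0..n. (\<Sum>i=0..k. \<alpha> i)\<^sup>2))"
      using nn alpha_le[of \<alpha> n] by (intro mult_left_mono) auto
    also have "\<dots> = (1 - \<tau>) * w0 * (\<Sum>k=0..n. hmin * (c k)\<^sup>2)"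
      using cdef by (simp add: sum_distrib_left mult_ac)
    also have "\<dots> \<le> (1 - \<tau>) * w0 * (\<Sum>k=0..n. h k * (c k)\<^sup>2)"
      using w0 tau hm by (intro mult_left_mono sum_mono mult_right_mono) auto
    finally show ?thesis .
  qed
  show ?thesis using cr q sh sh2 m by (simp add: algebra_simps)
qed



lemma chain_le: fixes b :: "nat \<Rightarrow> real"
  assumes "\<forall>i<N. b i \<le> b (Suc i)" shows "i \<le> j \<Longrightarrow> j \<le> N \<Longrightarrow> b i \<le> b j"
proof (induction j)
  case 0 then show ?case by simp
next
  case (Suc j)
  show ?case
  proof (cases "i = Suc j")
    case False
    then have "b i \<le> b j" using Suc by simp
    also have "b j \<le> b (Suc j)" using assms Suc by simp
    finally show ?thesis .
  qed simp
qed

lemma chain_lt: fixes b :: "nat \<Rightarrow> real"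
  assumes "\<forall>i<N. b i < b (Suc i)" shows "i < j \<Longrightarrow> j \<le> N \<Longrightarrow> b i < b j"
proof (induction j)
  case 0 then show ?case by simp
next
  case (Suc j)
  show ?case
  proof (cases "i = j")
    case False
    then have "b i < b j" using Suc by simp
    also have "b j < b (Suc j)" using assms Suc by simp
    finally show ?thesis .
  next
    case True then show ?thesis using assms Suc by simp
  qed
qed

lemma split_int: fixes b :: "nat \<Rightarrow> real" and f :: "real \<Rightarrow> real"
  assumes "\<forall>i<N. b i \<le> b (Suc i)" "f integrable_on {b 0..b N}"
  shows "integral {b 0..b N} f = (\<Sum>k<N. integral {b k..b (Suc k)} f)"
  using assms
proof (induction N)
  case 0 then show ?case by simp
next
  case (Suc N)
  have m1: "b 0 \<le> b N" using chain_le[OF Suc.prems(1), of 0 N] by simp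
  have m2: "b N \<le> b (Suc N)" using Suc.prems(1) by simp
  have i: "f integrable_on {b 0..b N}"
    by (rule integrable_subinterval_real[OF Suc.prems(2)]) (use m2 in auto)
  have "integral {b 0..b N} f = (\<Sum>k<N. integral {b k..b (Suc k)} f)"
    using Suc.IH Suc.prems(1) i by simp
  moreover have "integral {b 0..b N} f + integral {b N..b (Suc N)} f = integral {b 0..b (Suc N)} f"
    using m1 m2 Suc.prems(2) by (rule Henstock_Kurzweil_Integration.integral_combine)
  ultimately show ?case by simp
qed

lemma relu_piece: fixes b :: "nat \<Rightarrow> real"
  assumes bs: "\<forall>i\<le>n. b i < b (Suc i)" and k: "k \<le> n" and x: "b k < x" "x < b (Suc k)"
  shows "(\<Sum>i=m..n. a i * relu (x - b i)) = (\<Sum>i=m..k. a i * (x - b i))"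
proof (rule sum.mono_neutral_cong_right)
  have bl: "\<forall>i<Suc n. b i \<le> b (Suc i)" using bs by (auto intro: less_imp_le)
  show "\<forall>i\<in>{m..n} - {m..k}. a i * relu (x - b i) = 0"
  proof
    fix i assume i: "i \<in> {m..n} - {m..k}"
    then have "b (Suc k) \<le> b i" using chain_le[OF bl, of "Suc k" i] by auto
    then show "a i * relu (x - b i) = 0" using x unfolding relu_def by simp
  qed
  show "a i * relu (x - b i) = a i * (x - b i)" if "i \<in> {m..k}" for i
  proof -
    have "b i \<le> b k" using chain_le[OF bl, of i k] that k by auto
    then show ?thesis using x unfolding relu_def by simp
  qed
qed (use k in auto)

lemma heav_piece: fixes b :: "nat \<Rightarrow> real"
  assumes bs: "\<forall>i\<le>n. b i < b (Suc i)" and k: "k \<le> n" and x: "b k < x" "x < b (Suc k)"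
  shows "(\<Sum>i=m..n. a i * heav (x - b i)) = (\<Sum>i=m..k. a i)"
proof (rule sum.mono_neutral_cong_right)
  have bl: "\<forall>i<Suc n. b i \<le> b (Suc i)" using bs by (auto intro: less_imp_le)
  show "\<forall>i\<in>{m..n} - {m..k}. a i * heav (x - b i) = 0"
  proof
    fix i assume i: "i \<in> {m..n} - {m..k}"
    then have "b (Suc k) \<le> b i" using chain_le[OF bl, of "Suc k" i] by auto
    then show "a i * heav (x - b i) = 0" using x unfolding heav_def by simp
  qed
  show "a i * heav (x - b i) = a i" if "i \<in> {m..k}" for i
  proof -
    have "b i \<le> b k" using chain_le[OF bl, of i k] that k by auto
    then show ?thesis using x unfolding heav_def by simp
  qed
qed (use k in auto)

lemma heav_mid: fixes b :: "nat \<Rightarrow> real"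
  assumes bs: "\<forall>i\<le>n. b i < b (Suc i)" and j: "1 \<le> j" "j \<le> n"
  shows "(\<Sum>i=0..n. a i * heav (b j - b i)) = ((\<Sum>i=0..j-1. a i) + (\<Sum>i=0..j. a i)) / 2"
proof -
  have bl: "\<forall>i<Suc n. b i < b (Suc i)" using bs by auto
  obtain m where m: "j = Suc m" using j by (cases j) auto
  have "(\<Sum>i=0..n. a i * heav (b j - b i)) = (\<Sum>i=0..j. a i * heav (b j - b i))"
  proof (rule sum.mono_neutral_right)
    show "\<forall>i\<in>{0..n} - {0..j}. a i * heav (b j - b i) = 0"
    proof
      fix i assume i: "i \<in> {0..n} - {0..j}"
      then have "b j < b i" using chain_lt[OF bl, of j i] by auto
      then show "a i * heav (b j - b i) = 0" unfolding heav_def by simp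
    qed
  qed (use j in auto)
  also have "\<dots> = (\<Sum>i=0..m. a i * heav (b j - b i)) + a j / 2"
    unfolding m by (simp add: sum.atLeast0_atMost_Suc heav_def)
  also have "(\<Sum>i=0..m. a i * heav (b j - b i)) = (\<Sum>i=0..m. a i)"
  proof (rule sum.cong)
    fix i assume "i \<in> {0..m}"
    then have "b i < b j" using chain_lt[OF bl, of i j] m j by auto
    then show "a i * heav (b j - b i) = a i" unfolding heav_def by simp
  qed simp
  finally show ?thesis unfolding m by (simp add: sum.atLeast0_atMost_Suc field_simps)
qed

lemma lin_id: fixes a b :: "nat \<Rightarrow> real"
  shows "(\<Sum>i=0..k. a i * (x - b i)) = (\<Sum>i=0..k. a i * (y - b i)) + (\<Sum>i=0..k. a i) * (x - y)"
proof -
  have "(\<Sum>i=0..k. a i * (x - b i)) = (\<Sum>i=0..k. a i * (y - b i) + a i * (x - y))"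
    by (rule sum.cong) (simp_all add: algebra_simps)
  then show ?thesis by (simp add: sum.distrib sum_distrib_right)
qed

lemma poly_int: fixes c d L s :: real assumes "c \<le> d"
  shows "((\<lambda>x. (L + s*(x - c))\<^sup>2) has_integral ((d - c)*(L\<^sup>2 + L * s * (d - c) + s\<^sup>2 * (d - c)\<^sup>2 / 3))) {c..d}"
proof -
  define F where "F x = L\<^sup>2 * (x - c) + L * s * (x - c)\<^sup>2 + s\<^sup>2 * (x - c) ^ 3 / 3" for x
  have d: "(F has_vector_derivative (L + s*(x - c))\<^sup>2) (at x within {c..d})" for x
  proof -
    have "(F has_real_derivative (L + s*(x - c))\<^sup>2) (at x within {c..d})"
      unfolding F_def
      by (auto intro!: derivative_eq_intros simp: field_simps power2_eq_square)
    then show ?thesis by (simp add: has_real_derivative_iff_has_vector_derivative)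
  qed
  have "((\<lambda>x. (L + s*(x - c))\<^sup>2) has_integral (F d - F c)) {c..d}"
    using assms d by (intro fundamental_theorem_of_calculus) auto
  moreover have "F d - F c = (d - c)*(L\<^sup>2 + L * s * (d - c) + s\<^sup>2 * (d - c)\<^sup>2 / 3)"
    unfolding F_def by (simp add: field_simps power2_eq_square power3_eq_cube)
  ultimately show ?thesis by simp
qed



theorem lemma4p2:
  fixes n :: nat and b :: "nat \<Rightarrow> real" and w :: "real \<Rightarrow> real" and w0 :: real
    and \<alpha> \<beta> :: "nat \<Rightarrow> real"
  assumes "n \<ge> 1"
    and "b 0 = 0" and "b (n + 1) = 1"
    and "\<forall>i\<le>n. b i < b (Suc i)"
    and "continuous_on {0<..<1} w"
    and "w integrable_on {0..1}"
    and "0 \<le> w0" and "\<forall>x\<in>{0<..<1}. w0 \<le> w x"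
  defines "h \<equiv> (\<lambda>i. b (i + 1) - b i)"
  defines "hmin \<equiv> Min (h ` {0..n})"
  defines "ht \<equiv> (\<lambda>i. min (h (i - 1)) (h i))"
  shows "HSigma_form w b n \<alpha> \<beta>
           \<ge> w0 * hmin ^ 3 / 96 * (\<Sum>i=0..n. (\<alpha> i)\<^sup>2) + w0 / 24 * (\<Sum>i=1..n. ht i * (\<beta> i)\<^sup>2)
       \<and> (w0 > 0 \<longrightarrow> (\<forall>\<tau>\<in>{0<..1}.
           HLambda_form w b n \<alpha> \<beta>
             \<ge> w0 * (1 - \<tau>) * hmin / 4 * (\<Sum>i=0..n. (\<alpha> i)\<^sup>2)
               - 1 / (2 * \<tau> * w0) * (\<Sum>i=1..n. (w (b i))\<^sup>2 * (1 / h (i - 1) + 1 / h i) * (\<beta> i)\<^sup>2)))"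
proof -
  note bs = assms(4)
  have b0: "b 0 = 0" and b1: "b (Suc n) = 1" using assms(2,3) by auto
  have hpos: "\<forall>k\<le>n. 0 < h k" using bs unfolding h_def by auto
  have hS: "\<And>k. h k = b (Suc k) - b k" unfolding h_def by simp
  have fin: "finite (h ` {0..n})" "h ` {0..n} \<noteq> {}" by auto
  have "hmin \<in> h ` {0..n}" unfolding hmin_def using fin by (rule Min_in)
  then have hm0: "0 < hmin" using hpos by auto
  have hmle: "\<forall>k\<le>n. hmin \<le> h k" unfolding hmin_def using fin by auto
  define W where "W = Wf w w0"
  have WA: "W absolutely_integrable_on {0..1}" unfolding W_def using assms(6,7,8) by (rule Wf_abs)
  have Wge: "\<forall>x\<in>{0..1}. w0 \<le> W x" using assms(8) unfolding W_def Wf_def by auto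
  have bl: "\<forall>i<Suc n. b i \<le> b (Suc i)" using bs by (auto intro: less_imp_le)
  have one: "(\<lambda>x::real. 1::real) absolutely_integrable_on {0..1}"
    by (rule nonnegative_absolutely_integrable_1) (auto intro: Henstock_Kurzweil_Integration.integrable_const_ivl)
  have cW: "(\<lambda>x::real. w0) absolutely_integrable_on {0..1}"
    using assms(7) by (intro nonnegative_absolutely_integrable_1) (auto intro: Henstock_Kurzweil_Integration.integrable_const_ivl)
  have spl: "integral {0..1} f = (\<Sum>k=0..n. integral {b k..b (Suc k)} f)"
    if "f integrable_on {0..1}" for f :: "real \<Rightarrow> real"
  proof -
    have "integral {b 0..b (Suc n)} f = (\<Sum>k<Suc n. integral {b k..b (Suc k)} f)"
      by (rule split_int) (use bl that b0 b1 in auto)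
    then show ?thesis using b0 b1 by (simp add: atLeast0AtMost lessThan_Suc_atMost)
  qed
  have sub_int: "\<And>k. k \<le> n \<Longrightarrow> b k \<le> b (Suc k)" using bs by (auto intro: less_imp_le)
  have W_lower: "w0 * integral {0..1} (\<lambda>x. g x * g x) \<le> integral {0..1} (\<lambda>x. W x * (g x * g x))"
    if "BM g" for g :: "real \<Rightarrow> real"
  proof -
    have Bg: "BM (\<lambda>x. g x * g x)" by (rule BM_mult[OF that that])
    have "integral {0..1} (\<lambda>x. w0 * (g x * g x)) \<le> integral {0..1} (\<lambda>x. W x * (g x * g x))"
    proof (rule integral_le)
      show "(\<lambda>x. w0 * (g x * g x)) integrable_on {0..1}" using BM_int[OF Bg cW] by simp
      show "(\<lambda>x. W x * (g x * g x)) integrable_on {0..1}" using BM_int[OF Bg WA] by simp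
      show "w0 * (g x * g x) \<le> W x * (g x * g x)" if "x \<in> {0..1}" for x
        using Wge that by (intro mult_right_mono) auto
    qed
    then show ?thesis by simp
  qed
  have gg_int: "(\<lambda>x. g x * g x) integrable_on {0..1}" if "BM g" for g :: "real \<Rightarrow> real"
    using BM_int[OF BM_mult[OF that that] one] by simp
  define F where "F = (\<lambda>x. \<Sum>i=0..n. \<alpha> i * relu (x - b i))"
  define G where "G = (\<lambda>x. \<Sum>j=1..n. \<beta> j * heav (x - b j))"
  define u where "u = (\<lambda>x. F x - G x)"
  have BF: "BM F" unfolding F_def by (intro BM_sum BM_mult BM_const BM_relu) auto
  have BG: "BM G" unfolding G_def by (intro BM_sum BM_mult BM_const BM_heav) auto
  have Bu: "BM u" unfolding u_def using BF BG by (rule BM_diff)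
  have iFF: "(\<lambda>x. W x * (F x * F x)) integrable_on {0..1}" by (rule BM_int[OF BM_mult[OF BF BF] WA])
  have iFG: "(\<lambda>x. W x * (F x * G x)) integrable_on {0..1}" by (rule BM_int[OF BM_mult[OF BF BG] WA])
  have iGG: "(\<lambda>x. W x * (G x * G x)) integrable_on {0..1}" by (rule BM_int[OF BM_mult[OF BG BG] WA])
  have blk1: "(\<Sum>i=0..n. \<Sum>j=0..n. \<alpha> i * integral {0..1} (\<lambda>x. w x * relu (x - b i) * relu (x - b j)) * \<alpha> j)
     = integral {0..1} (\<lambda>x. W x * (F x * F x))"
  proof -
    have "(\<Sum>i=0..n. \<Sum>j=0..n. \<alpha> i * integral {0..1} (\<lambda>x. w x * relu (x - b i) * relu (x - b j)) * \<alpha> j)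
      = (\<Sum>i=0..n. \<Sum>j=0..n. \<alpha> i * integral {0..1} (\<lambda>x. W x * (relu (x - b i) * relu (x - b j))) * \<alpha> j)"
      unfolding W_def by (simp only: Wf_spike[where c=w0])
    also have "\<dots> = integral {0..1} (\<lambda>x. W x * (F x * F x))"
      unfolding F_def by (rule bil) (auto intro: BM_int[OF BM_mult[OF BM_relu BM_relu] WA])
    finally show ?thesis .
  qed
  have blk2: "(\<Sum>i=0..n. \<Sum>j=1..n. \<alpha> i * (- integral {0..1} (\<lambda>x. w x * relu (x - b i) * heav (x - b j))) * \<beta> j)
     = - integral {0..1} (\<lambda>x. W x * (F x * G x))"
  proof -
    have "(\<Sum>i=0..n. \<Sum>j=1..n. \<alpha> i * integral {0..1} (\<lambda>x. w x * relu (x - b i) * heav (x - b j)) * \<beta> j)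
      = (\<Sum>i=0..n. \<Sum>j=1..n. \<alpha> i * integral {0..1} (\<lambda>x. W x * (relu (x - b i) * heav (x - b j))) * \<beta> j)"
      unfolding W_def by (simp only: Wf_spike[where c=w0])
    also have "\<dots> = integral {0..1} (\<lambda>x. W x * (F x * G x))"
      unfolding F_def G_def by (rule bil) (auto intro: BM_int[OF BM_mult[OF BM_relu BM_heav] WA])
    finally show ?thesis by (simp add: sum_negf)
  qed
  have blk3: "(\<Sum>i=1..n. \<Sum>j=0..n. \<beta> i * (- integral {0..1} (\<lambda>x. w x * relu (x - b j) * heav (x - b i))) * \<alpha> j)
     = (\<Sum>i=0..n. \<Sum>j=1..n. \<alpha> i * (- integral {0..1} (\<lambda>x. w x * relu (x - b i) * heav (x - b j))) * \<beta> j)"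
    by (subst sum.swap) (simp add: mult_ac)
  have blk4: "(\<Sum>i=1..n. \<Sum>j=1..n. \<beta> i * integral {0..1} (\<lambda>x. w x * heav (x - b i) * heav (x - b j)) * \<beta> j)
     = integral {0..1} (\<lambda>x. W x * (G x * G x))"
  proof -
    have "(\<Sum>i=1..n. \<Sum>j=1..n. \<beta> i * integral {0..1} (\<lambda>x. w x * heav (x - b i) * heav (x - b j)) * \<beta> j)
      = (\<Sum>i=1..n. \<Sum>j=1..n. \<beta> i * integral {0..1} (\<lambda>x. W x * (heav (x - b i) * heav (x - b j))) * \<beta> j)"
      unfolding W_def by (simp only: Wf_spike[where c=w0])
    also have "\<dots> = integral {0..1} (\<lambda>x. W x * (G x * G x))"
      unfolding G_def by (rule bil) (auto intro: BM_int[OF BM_mult[OF BM_heav BM_heav] WA])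
    finally show ?thesis .
  qed
  have HS: "HSigma_form w b n \<alpha> \<beta> = integral {0..1} (\<lambda>x. W x * (u x * u x))"
  proof -
    have fe: "(\<lambda>x. W x * (u x * u x)) = (\<lambda>x. (W x * (F x * F x) + W x * (G x * G x)) - 2 * (W x * (F x * G x)))"
      unfolding u_def by (rule ext) (simp add: algebra_simps)
    have "integral {0..1} (\<lambda>x. W x * (u x * u x))
       = integral {0..1} (\<lambda>x. W x * (F x * F x)) + integral {0..1} (\<lambda>x. W x * (G x * G x))
         - 2 * integral {0..1} (\<lambda>x. W x * (F x * G x))"
      unfolding fe using iFF iFG iGG
      by (simp add: integral_diff integral_add integrable_add int_cmul)
    then show ?thesis unfolding HSigma_form_def blk1 blk3 blk2 blk4 by simp
  qed
  define L where "L = (\<lambda>k. (\<Sum>i=0..k. \<alpha> i * (b k - b i)) - (\<Sum>j=1..k. \<beta> j))"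
  define s where "s = (\<lambda>k. \<Sum>i=0..k. \<alpha> i)"
  have upiece: "integral {b k..b (Suc k)} (\<lambda>x. u x * u x)
      = h k * ((L k)\<^sup>2 + L k * s k * h k + (s k)\<^sup>2 * (h k)\<^sup>2 / 3)" if k: "k \<le> n" for k
  proof -
    have "integral {b k..b (Suc k)} (\<lambda>x. u x * u x) = integral {b k..b (Suc k)} (\<lambda>x. (L k + s k * (x - b k))\<^sup>2)"
    proof (rule integral_spike[of "{b k, b (Suc k)}"])
      fix x assume x: "x \<in> {b k..b (Suc k)} - {b k, b (Suc k)}"
      then have x1: "b k < x" "x < b (Suc k)" by auto
      have "F x = (\<Sum>i=0..k. \<alpha> i * (x - b i))" unfolding F_def using relu_piece[OF bs k x1] .
      also have "\<dots> = (\<Sum>i=0..k. \<alpha> i * (b k - b i)) + s k * (x - b k)"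
        unfolding s_def by (rule lin_id)
      finally have "F x = (\<Sum>i=0..k. \<alpha> i * (b k - b i)) + s k * (x - b k)" .
      moreover have "G x = (\<Sum>j=1..k. \<beta> j)" unfolding G_def using heav_piece[OF bs k x1] .
      ultimately have "u x = L k + s k * (x - b k)" unfolding u_def L_def by simp
      then show "(L k + s k * (x - b k))\<^sup>2 = u x * u x" by (simp add: power2_eq_square)
    qed simp
    also have "\<dots> = h k * ((L k)\<^sup>2 + L k * s k * h k + (s k)\<^sup>2 * (h k)\<^sup>2 / 3)"
      using poly_int[OF sub_int[OF k], of "L k" "s k"] unfolding hS by (rule integral_unique)
    finally show ?thesis .
  qed
  have bet: "\<forall>k\<in>{1..n}. \<beta> k = (L (k-1) + s (k-1) * h (k-1)) - L k"
  proof
    fix k assume "k \<in> {1..n}"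
    then obtain m where m: "k = Suc m" by (cases k) auto
    have "(\<Sum>i=0..m. \<alpha> i * (b (Suc m) - b i)) = (\<Sum>i=0..m. \<alpha> i * (b m - b i)) + s m * (b (Suc m) - b m)"
      unfolding s_def by (rule lin_id)
    then show "\<beta> k = (L (k-1) + s (k-1) * h (k-1)) - L k"
      unfolding m L_def hS by (simp add: sum.atLeast0_atMost_Suc)
  qed
  have part1: "w0 * hmin ^ 3 / 96 * (\<Sum>i=0..n. (\<alpha> i)\<^sup>2) + w0 / 24 * (\<Sum>i=1..n. ht i * (\<beta> i)\<^sup>2)
      \<le> HSigma_form w b n \<alpha> \<beta>"
  proof -
    have d: "hmin^3/96 * (\<Sum>i=0..n. (\<alpha> i)\<^sup>2) + 1/24 * (\<Sum>i=1..n. min (h (i-1)) (h i) * (\<beta> i)\<^sup>2)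
     \<le> (\<Sum>k=0..n. h k * ((L k)\<^sup>2 + L k * s k * h k + (s k)\<^sup>2 * (h k)\<^sup>2/3))"
      using hpos hm0 hmle bet unfolding s_def by (intro disc_sigma) auto
    also have "\<dots> = integral {0..1} (\<lambda>x. u x * u x)"
      using spl[OF gg_int[OF Bu]] upiece by simp
    finally have d2: "hmin^3/96 * (\<Sum>i=0..n. (\<alpha> i)\<^sup>2) + 1/24 * (\<Sum>i=1..n. ht i * (\<beta> i)\<^sup>2)
       \<le> integral {0..1} (\<lambda>x. u x * u x)" unfolding ht_def .
    have "w0 * (hmin^3/96 * (\<Sum>i=0..n. (\<alpha> i)\<^sup>2) + 1/24 * (\<Sum>i=1..n. ht i * (\<beta> i)\<^sup>2))
       \<le> w0 * integral {0..1} (\<lambda>x. u x * u x)"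
      using d2 assms(7) by (rule mult_left_mono)
    also have "\<dots> \<le> HSigma_form w b n \<alpha> \<beta>" unfolding HS using W_lower[OF Bu] .
    finally show ?thesis by (simp add: algebra_simps)
  qed
  define V where "V = (\<lambda>x. \<Sum>i=0..n. \<alpha> i * heav (x - b i))"
  have BV: "BM V" unfolding V_def by (intro BM_sum BM_mult BM_const BM_heav) auto
  have lblk1: "(\<Sum>i=0..n. \<Sum>j=0..n. \<alpha> i * integral {0..1} (\<lambda>x. w x * heav (x - b i) * heav (x - b j)) * \<alpha> j)
     = integral {0..1} (\<lambda>x. W x * (V x * V x))"
  proof -
    have "(\<Sum>i=0..n. \<Sum>j=0..n. \<alpha> i * integral {0..1} (\<lambda>x. w x * heav (x - b i) * heav (x - b j)) * \<alpha> j)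
      = (\<Sum>i=0..n. \<Sum>j=0..n. \<alpha> i * integral {0..1} (\<lambda>x. W x * (heav (x - b i) * heav (x - b j))) * \<alpha> j)"
      unfolding W_def by (simp only: Wf_spike[where c=w0])
    also have "\<dots> = integral {0..1} (\<lambda>x. W x * (V x * V x))"
      unfolding V_def by (rule bil) (auto intro: BM_int[OF BM_mult[OF BM_heav BM_heav] WA])
    finally show ?thesis .
  qed
  define c where "c = (\<lambda>k. \<Sum>i=0..k. \<alpha> i)"
  have mid: "(\<Sum>i=0..n. \<alpha> i * heav (b j - b i)) = (c (j-1) + c j) / 2" if "j \<in> {1..n}" for j
    unfolding c_def using heav_mid[OF bs, of j] that by auto
  have lblk2: "(\<Sum>i=0..n. \<Sum>j=1..n. \<alpha> i * (- w (b j) * heav (b j - b i)) * \<beta> j)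
      = - (\<Sum>j=1..n. \<beta> j * w (b j) * ((c (j-1) + c j) / 2))"
  proof -
    have "(\<Sum>i=0..n. \<Sum>j=1..n. \<alpha> i * (- w (b j) * heav (b j - b i)) * \<beta> j)
      = (\<Sum>j=1..n. \<Sum>i=0..n. \<alpha> i * (- w (b j) * heav (b j - b i)) * \<beta> j)"
      by (rule sum.swap)
    also have "\<dots> = (\<Sum>j=1..n. - (\<beta> j * w (b j) * (\<Sum>i=0..n. \<alpha> i * heav (b j - b i))))"
      by (rule sum.cong) (simp_all add: sum_distrib_left sum_negf mult_ac)
    also have "\<dots> = - (\<Sum>j=1..n. \<beta> j * w (b j) * ((c (j-1) + c j) / 2))"
    proof -
      have e: "(\<Sum>j=1..n. \<beta> j * w (b j) * (\<Sum>i=0..n. \<alpha> i * heav (b j - b i)))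
         = (\<Sum>j=1..n. \<beta> j * w (b j) * ((c (j-1) + c j) / 2))"
        by (rule sum.cong[OF refl]) (simp only: mid)
      show ?thesis unfolding sum_negf e by (rule refl)
    qed
    finally show ?thesis .
  qed
  have lblk3: "(\<Sum>i=1..n. \<Sum>j=0..n. \<beta> i * (- w (b i) * heav (b i - b j)) * \<alpha> j)
      = - (\<Sum>j=1..n. \<beta> j * w (b j) * ((c (j-1) + c j) / 2))"
  proof -
    have "(\<Sum>i=1..n. \<Sum>j=0..n. \<beta> i * (- w (b i) * heav (b i - b j)) * \<alpha> j)
      = (\<Sum>i=1..n. - (\<beta> i * w (b i) * (\<Sum>j=0..n. \<alpha> j * heav (b i - b j))))"
      by (rule sum.cong) (simp_all add: sum_distrib_left sum_negf mult_ac)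
    also have "\<dots> = - (\<Sum>j=1..n. \<beta> j * w (b j) * ((c (j-1) + c j) / 2))"
    proof -
      have e: "(\<Sum>i=1..n. \<beta> i * w (b i) * (\<Sum>j=0..n. \<alpha> j * heav (b i - b j)))
         = (\<Sum>j=1..n. \<beta> j * w (b j) * ((c (j-1) + c j) / 2))"
        by (rule sum.cong[OF refl]) (simp only: mid)
      show ?thesis unfolding sum_negf e by (rule refl)
    qed
    finally show ?thesis .
  qed
  have HL: "HLambda_form w b n \<alpha> \<beta> = integral {0..1} (\<lambda>x. W x * (V x * V x))
      - (\<Sum>j=1..n. \<beta> j * w (b j) * (c (j-1) + c j))"
  proof -
    have "(\<Sum>j=1..n. \<beta> j * w (b j) * ((c (j-1) + c j) / 2)) * 2 = (\<Sum>j=1..n. \<beta> j * w (b j) * (c (j-1) + c j))"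
      by (simp add: sum_distrib_right)
    then show ?thesis unfolding HLambda_form_def lblk1 lblk2 lblk3 by simp
  qed
  have vpiece: "integral {b k..b (Suc k)} (\<lambda>x. V x * V x) = h k * (c k)\<^sup>2" if k: "k \<le> n" for k
  proof -
    have "integral {b k..b (Suc k)} (\<lambda>x. V x * V x) = integral {b k..b (Suc k)} (\<lambda>x. c k * c k)"
    proof (rule integral_spike[of "{b k, b (Suc k)}"])
      fix x assume x: "x \<in> {b k..b (Suc k)} - {b k, b (Suc k)}"
      then have x1: "b k < x" "x < b (Suc k)" by auto
      have "V x = c k" unfolding V_def c_def using heav_piece[OF bs k x1] .
      then show "c k * c k = V x * V x" by simp
    qed simp
    also have "\<dots> = h k * (c k)\<^sup>2" using sub_int[OF k] unfolding hS by (simp add: power2_eq_square)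
    finally show ?thesis .
  qed
  have part2: "w0 > 0 \<longrightarrow> (\<forall>\<tau>\<in>{0<..1}.
           HLambda_form w b n \<alpha> \<beta>
             \<ge> w0 * (1 - \<tau>) * hmin / 4 * (\<Sum>i=0..n. (\<alpha> i)\<^sup>2)
               - 1 / (2 * \<tau> * w0) * (\<Sum>i=1..n. (w (b i))\<^sup>2 * (1 / h (i - 1) + 1 / h i) * (\<beta> i)\<^sup>2))"
  proof (intro impI ballI)
    fix \<tau> :: real assume w0: "0 < w0" and t: "\<tau> \<in> {0<..1}"
    have d: "w0 * (1 - \<tau>) * hmin / 4 * (\<Sum>i=0..n. (\<alpha> i)\<^sup>2)
       - 1 / (2 * \<tau> * w0) * (\<Sum>i=1..n. (w (b i))\<^sup>2 * (1 / h (i - 1) + 1 / h i) * (\<beta> i)\<^sup>2)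
     \<le> w0 * (\<Sum>k=0..n. h k * (c k)\<^sup>2) - (\<Sum>j=1..n. \<beta> j * w (b j) * (c (j-1) + c j))"
      using hpos hm0 hmle w0 t unfolding c_def by (intro disc_lambda) auto
    have "(\<Sum>k=0..n. h k * (c k)\<^sup>2) = integral {0..1} (\<lambda>x. V x * V x)"
      using spl[OF gg_int[OF BV]] vpiece by simp
    then have "w0 * (\<Sum>k=0..n. h k * (c k)\<^sup>2) \<le> integral {0..1} (\<lambda>x. W x * (V x * V x))"
      using W_lower[OF BV] by simp
    then show "HLambda_form w b n \<alpha> \<beta>
             \<ge> w0 * (1 - \<tau>) * hmin / 4 * (\<Sum>i=0..n. (\<alpha> i)\<^sup>2)
               - 1 / (2 * \<tau> * w0) * (\<Sum>i=1..n. (w (b i))\<^sup>2 * (1 / h (i - 1) + 1 / h i) * (\<beta> i)\<^sup>2)"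
      using d unfolding HL by linarith
  qed
  show ?thesis using part1 part2 by blast
qed

end
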